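(* Let $X$ be a real Hilbert space, $I$ a finite index set, and $(T_i)_{i\in I}$ averaged nonexpansive, boundedly linearly regular operators $X\to X$ with $Z_i=\operatorname{Fix}T_i$, $Z=\bigcap_iZ_i\ne\varnothing$, and $(Z_i)_{i\in I}$ boundedly linearly regular. Let $(\pi_i)_{i\in I}$ be probabilities with $\pi_i>0$ and $\sum_i\pi_i=1$. Let $x_0\in X$ and generate $x_{n+1}=T_{i_n}x_n$ where the indices $i_n$ are chosen independently with $\mathbb P(i_n=i)=\pi_i$. Then there is a constant $\theta<1$, depending only on $x_0$ (and the data $(T_i),(\pi_i)$), such that for every $n\in\mathbb N$, $\mathbf E\big[d_Z^2(x_{n+1})\mid x_n\big]\le\theta\,d_Z^2(x_n)$.
   Context: $T$ is averaged nonexpansive if $T=(1-\lambda)\mathrm{Id}+\lambda N$ with $\lambda\in[0,1[$ and $N$ nonexpansive; boundedly linearly regular (operator) if for each $\rho>0$ there is $\kappa\ge0$ with $d_{\operatorname{Fix}T}(x)\le\kappa\|x-Tx\|$ for all $\|x\|\le\rho$. A finite family $(C_i)$ of closed convex sets with $C=\bigcap_iC_i\ne\varnothing$ is boundedly linearly regular if for every $\rho>0$ there is $\mu>0$ with $d_C(x)\le\mu\max_id_{C_i}(x)$ for all $\|x\|\le\rho$. *)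

theory Defs
  imports "HOL-Probability.Probability"
begin

definition Fix :: "('a \<Rightarrow> 'a) \<Rightarrow> 'a set" where
  "Fix T = {x. T x = x}"

definition nonexpansive :: "('a::real_normed_vector \<Rightarrow> 'a) \<Rightarrow> bool" where
  "nonexpansive N \<longleftrightarrow> (\<forall>x y. norm (N x - N y) \<le> norm (x - y))"

definition averaged_nonexpansive :: "('a::real_normed_vector \<Rightarrow> 'a) \<Rightarrow> bool" where
  "averaged_nonexpansive T \<longleftrightarrow>
     (\<exists>t::real. 0 \<le> t \<and> t < 1 \<and>
        (\<exists>N. nonexpansive N \<and> T = (\<lambda>x. (1 - t) *\<^sub>R x + t *\<^sub>R N x)))"

definition bdd_lin_reg_op :: "('a::real_normed_vector \<Rightarrow> 'a) \<Rightarrow> bool" where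
  "bdd_lin_reg_op T \<longleftrightarrow>
     (\<forall>\<rho>>0. \<exists>\<kappa>\<ge>0. \<forall>x. norm x \<le> \<rho> \<longrightarrow> infdist x (Fix T) \<le> \<kappa> * norm (x - T x))"

definition bdd_lin_reg_sets :: "('i::finite \<Rightarrow> 'a::real_normed_vector set) \<Rightarrow> bool" where
  "bdd_lin_reg_sets C \<longleftrightarrow>
     (\<forall>i. closed (C i) \<and> convex (C i)) \<and> (\<Inter>i. C i) \<noteq> {} \<and>
     (\<forall>\<rho>>0. \<exists>\<mu>>0. \<forall>x. norm x \<le> \<rho> \<longrightarrow>
        infdist x (\<Inter>i. C i) \<le> \<mu> * Max (range (\<lambda>i. infdist x (C i))))"

primrec rand_iter :: "('i \<Rightarrow> 'a \<Rightarrow> 'a) \<Rightarrow> (nat \<Rightarrow> 'b \<Rightarrow> 'i) \<Rightarrow> 'a \<Rightarrow> nat \<Rightarrow> 'b \<Rightarrow> 'a" where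
  "rand_iter T idx x0 0 \<omega> = x0"
| "rand_iter T idx x0 (Suc n) \<omega> = T (idx n \<omega>) (rand_iter T idx x0 n \<omega>)"

end

theory Submission
  imports Defs
begin


lemma avg_ineq:
  fixes T :: "'a::real_inner \<Rightarrow> 'a"
  assumes "averaged_nonexpansive T"
  shows "\<exists>c>0. \<forall>x p. T p = p \<longrightarrow> (norm (T x - p))\<^sup>2 \<le> (norm (x - p))\<^sup>2 - c * (norm (x - T x))\<^sup>2"
proof -
  obtain t N where t: "0 \<le> t" "t < 1" and N: "nonexpansive N" and TN: "T = (\<lambda>x. (1 - t) *\<^sub>R x + t *\<^sub>R N x)"
    using assms unfolding averaged_nonexpansive_def by blast
  show ?thesis
  proof (cases "t = 0")
    case True
    then have "\<And>x. T x = x" using TN by simp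
    then show ?thesis by (intro exI[of _ 1]) auto
  next
    case False
    then have tp: "t > 0" using t by simp
    show ?thesis
    proof (intro exI[of _ "(1 - t) / t"] conjI allI impI)
      show "(1 - t) / t > 0" using t tp by simp
      fix x p assume Tp: "T p = p"
      have "t *\<^sub>R (N p - p) = 0"
      proof -
        have "(1 - t) *\<^sub>R p + t *\<^sub>R N p = p" using Tp TN by simp
        then show ?thesis by (simp add: algebra_simps)
      qed
      then have Np: "N p = p" using tp by simp
      define u where "u = x - p"
      define v where "v = N x - p"
      have uv: "norm v \<le> norm u" using N Np unfolding nonexpansive_def u_def v_def by metis
      have e1: "T x - p = (1 - t) *\<^sub>R u + t *\<^sub>R v"
        unfolding TN u_def v_def by (simp add: algebra_simps)
      have e2: "x - T x = t *\<^sub>R (u - v)"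
        unfolding TN u_def v_def by (simp add: algebra_simps)
      have i1: "(norm ((1 - t) *\<^sub>R u + t *\<^sub>R v))\<^sup>2 = (1-t)^2 * (u \<bullet> u) + 2 * (1-t) * t * (u \<bullet> v) + t^2 * (v \<bullet> v)"
        unfolding power2_norm_eq_inner by (simp add: inner_add_left inner_add_right inner_commute[of v u] algebra_simps power2_eq_square)
      have i2: "(norm (t *\<^sub>R (u - v)))\<^sup>2 = t^2 * ((u \<bullet> u) - 2 * (u \<bullet> v) + (v \<bullet> v))"
        unfolding power2_norm_eq_inner by (simp add: inner_diff_left inner_diff_right inner_commute[of v u] algebra_simps power2_eq_square)
      have vv: "v \<bullet> v \<le> u \<bullet> u" using uv
        by (metis norm_ge_zero power2_norm_eq_inner power_mono)
      have "(1-t)^2 * (u \<bullet> u) + 2 * (1-t) * t * (u \<bullet> v) + t^2 * (v \<bullet> v)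
            \<le> (u \<bullet> u) - (1 - t) / t * (t^2 * ((u \<bullet> u) - 2 * (u \<bullet> v) + (v \<bullet> v)))"
      proof -
        have "(1 - t) / t * t^2 = (1 - t) * t" using tp by (simp add: power2_eq_square)
        then have "(1 - t) / t * (t^2 * ((u \<bullet> u) - 2 * (u \<bullet> v) + (v \<bullet> v))) = (1 - t) * t * ((u \<bullet> u) - 2 * (u \<bullet> v) + (v \<bullet> v))"
          by (metis mult.assoc)
        moreover have "(1-t)^2 * (u \<bullet> u) + 2 * (1-t) * t * (u \<bullet> v) + t^2 * (v \<bullet> v)
            = (u \<bullet> u) - (1 - t) * t * ((u \<bullet> u) - 2 * (u \<bullet> v) + (v \<bullet> v)) + t * ((v \<bullet> v) - (u \<bullet> u))"
          by (simp add: power2_eq_square algebra_simps)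
        moreover have "t * ((v \<bullet> v) - (u \<bullet> u)) \<le> 0" using vv tp by (simp add: mult_nonneg_nonpos)
        ultimately show ?thesis by linarith
      qed
      then show "(norm (T x - p))\<^sup>2 \<le> (norm (x - p))\<^sup>2 - (1 - t) / t * (norm (x - T x))\<^sup>2"
        using i1 i2 e1 e2 by (simp add: u_def power2_norm_eq_inner)
    qed
  qed
qed

lemma infdist_step:
  fixes T :: "'a::real_inner \<Rightarrow> 'a"
  assumes Z: "Z \<subseteq> Fix T" "Z \<noteq> {}" and c: "c \<ge> 0"
    and H: "\<forall>x p. T p = p \<longrightarrow> (norm (T x - p))\<^sup>2 \<le> (norm (x - p))\<^sup>2 - c * (norm (x - T x))\<^sup>2"
  shows "(infdist (T x) Z)\<^sup>2 \<le> (infdist x Z)\<^sup>2 - c * (norm (x - T x))\<^sup>2"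
proof -
  define a where "a = sqrt ((infdist (T x) Z)\<^sup>2 + c * (norm (x - T x))\<^sup>2)"
  have a0: "(infdist (T x) Z)\<^sup>2 + c * (norm (x - T x))\<^sup>2 \<ge> 0" using c by simp
  have "a \<le> dist x p" if p: "p \<in> Z" for p
  proof -
    have Tp: "T p = p" using Z p unfolding Fix_def by auto
    have "infdist (T x) Z \<le> norm (T x - p)" using infdist_le[OF p] by (simp add: dist_norm)
    then have "(infdist (T x) Z)\<^sup>2 \<le> (norm (T x - p))\<^sup>2" by (rule power_mono[OF _ infdist_nonneg])
    moreover have "(norm (T x - p))\<^sup>2 \<le> (norm (x - p))\<^sup>2 - c * (norm (x - T x))\<^sup>2" using H Tp by blast
    ultimately have "(infdist (T x) Z)\<^sup>2 + c * (norm (x - T x))\<^sup>2 \<le> (norm (x - p))\<^sup>2" by linarith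
    then show ?thesis unfolding a_def dist_norm by (metis norm_ge_zero real_sqrt_le_iff real_sqrt_abs abs_of_nonneg power2_eq_square real_sqrt_mult_self)
  qed
  then have "a \<le> infdist x Z" unfolding infdist_def using Z(2) by (auto intro!: cINF_greatest)
  then have "a\<^sup>2 \<le> (infdist x Z)\<^sup>2" by (rule power_mono) (use a0 in \<open>simp add: a_def\<close>)
  then show ?thesis using a0 unfolding a_def by simp
qed

lemma avg_cont:
  fixes T :: "'a::real_inner \<Rightarrow> 'a"
  assumes "averaged_nonexpansive T"
  shows "continuous_on UNIV T"
proof -
  obtain t N where N: "nonexpansive N" and TN: "T = (\<lambda>x. (1 - t) *\<^sub>R x + t *\<^sub>R N x)"
    using assms unfolding averaged_nonexpansive_def by blast
  have "1-lipschitz_on UNIV N" using N unfolding nonexpansive_def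
    by (intro lipschitz_onI) (auto simp: dist_norm)
  then have "continuous_on UNIV N" by (rule lipschitz_on_continuous_on)
  then show ?thesis unfolding TN by (intro continuous_intros)
qed

lemma avg_quasi:
  fixes T :: "'a::real_inner \<Rightarrow> 'a"
  assumes "averaged_nonexpansive T" "T p = p"
  shows "norm (T x - p) \<le> norm (x - p)"
proof -
  obtain c where c: "c > 0" "\<forall>x p. T p = p \<longrightarrow> (norm (T x - p))\<^sup>2 \<le> (norm (x - p))\<^sup>2 - c * (norm (x - T x))\<^sup>2"
    using avg_ineq[OF assms(1)] by blast
  then have "(norm (T x - p))\<^sup>2 \<le> (norm (x - p))\<^sup>2" using assms(2)
    by (smt (verit) mult_nonneg_nonneg zero_le_power2)
  then show ?thesis by (simp add: power2_le_iff_abs_le)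
qed

lemma iter_bound:
  fixes T :: "'i \<Rightarrow> 'a::real_inner \<Rightarrow> 'a"
  assumes "\<And>i. averaged_nonexpansive (T i)" "z \<in> (\<Inter>i. Fix (T i))"
  shows "norm (rand_iter T idx x0 n \<omega> - z) \<le> norm (x0 - z)"
proof (induction n)
  case 0 then show ?case by simp
next
  case (Suc n)
  have "norm (T (idx n \<omega>) (rand_iter T idx x0 n \<omega>) - z) \<le> norm (rand_iter T idx x0 n \<omega> - z)"
    using assms by (intro avg_quasi) (auto simp: Fix_def)
  then show ?case using Suc by simp
qed


lemma theta_exists:
  fixes T :: "'i::finite \<Rightarrow> 'a::real_inner \<Rightarrow> 'a" and \<pi> :: "'i \<Rightarrow> real"
  assumes avg: "\<And>i. averaged_nonexpansive (T i)"
    and reg: "\<And>i. bdd_lin_reg_op (T i)"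
    and Z_reg: "bdd_lin_reg_sets (\<lambda>i. Fix (T i))"
    and pi_pos: "\<And>i. \<pi> i > 0"
    and pi_sum: "(\<Sum>i\<in>UNIV. \<pi> i) = 1"
    and rho: "\<rho> > 0"
  shows "\<exists>\<theta><1. \<forall>x. norm x \<le> \<rho> \<longrightarrow>
     (\<Sum>i\<in>UNIV. \<pi> i * (infdist (T i x) (\<Inter>i. Fix (T i)))\<^sup>2) \<le> \<theta> * (infdist x (\<Inter>i. Fix (T i)))\<^sup>2"
proof -
  define Z where "Z = (\<Inter>i. Fix (T i))"
  have Zne: "Z \<noteq> {}" using Z_reg unfolding bdd_lin_reg_sets_def Z_def by blast
  have "\<forall>i. \<exists>c>0. \<forall>x p. T i p = p \<longrightarrow> (norm (T i x - p))\<^sup>2 \<le> (norm (x - p))\<^sup>2 - c * (norm (x - T i x))\<^sup>2"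
    using avg_ineq[OF avg] by blast
  then obtain c where c: "\<And>i. c i > 0" "\<And>i. \<forall>x p. T i p = p \<longrightarrow> (norm (T i x - p))\<^sup>2 \<le> (norm (x - p))\<^sup>2 - c i * (norm (x - T i x))\<^sup>2"
    by metis
  have "\<forall>i. \<exists>\<kappa>\<ge>0. \<forall>x. norm x \<le> \<rho> \<longrightarrow> infdist x (Fix (T i)) \<le> \<kappa> * norm (x - T i x)"
    using reg rho unfolding bdd_lin_reg_op_def by blast
  then obtain \<kappa> where \<kappa>: "\<And>i. \<kappa> i \<ge> 0" "\<And>i x. norm x \<le> \<rho> \<Longrightarrow> infdist x (Fix (T i)) \<le> \<kappa> i * norm (x - T i x)"
    by metis
  obtain \<mu> where \<mu>: "\<mu> > 0" "\<And>x. norm x \<le> \<rho> \<Longrightarrow> infdist x Z \<le> \<mu> * Max (range (\<lambda>i. infdist x (Fix (T i))))"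
    using Z_reg rho unfolding bdd_lin_reg_sets_def Z_def by blast
  define k where "k = (\<Sum>i\<in>UNIV. \<kappa> i)"
  define K where "K = (\<mu> * k)\<^sup>2"
  define m where "m = Min (range (\<lambda>i. \<pi> i * c i))"
  have K0: "K \<ge> 0" unfolding K_def by simp
  have m0: "m > 0" unfolding m_def using pi_pos c(1) by (subst Min_gr_iff) auto
  have mle: "m \<le> \<pi> i * c i" for i unfolding m_def by (rule Min_le) auto
  have kk: "\<kappa> i \<le> k" for i unfolding k_def by (rule member_le_sum) (auto intro: \<kappa>(1))
  show ?thesis unfolding Z_def[symmetric]
  proof (intro exI[of _ "1 - m / (K + 1)"] conjI allI impI)
    show "1 - m / (K + 1) < 1" using m0 K0 by simp
    fix x :: 'a assume x: "norm x \<le> \<rho>"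
    define d where "d = infdist x Z"
    define n where "n i = norm (x - T i x)" for i
    have d0: "d \<ge> 0" unfolding d_def by (rule infdist_nonneg)
    have dK: "d\<^sup>2 \<le> K * (\<Sum>i\<in>UNIV. (n i)\<^sup>2)"
    proof -
      have "Max (range (\<lambda>i. infdist x (Fix (T i)))) \<in> range (\<lambda>i. infdist x (Fix (T i)))"
        by (rule Max_in) auto
      then obtain j where j: "Max (range (\<lambda>i. infdist x (Fix (T i)))) = infdist x (Fix (T j))" by (metis (no_types, lifting) imageE)
      have "d \<le> \<mu> * (\<kappa> j * n j)" unfolding d_def n_def
        using \<mu>(2)[OF x] \<kappa>(2)[OF x, of j] j \<mu>(1) by (metis mult_left_mono order_trans less_imp_le)
      also have "\<dots> \<le> \<mu> * (k * n j)" using kk[of j] \<mu>(1) by (intro mult_left_mono mult_right_mono) (auto simp: n_def)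
      finally have "d\<^sup>2 \<le> (\<mu> * k * n j)\<^sup>2" using d0 by (intro power_mono) (auto simp: mult.assoc)
      also have "\<dots> = K * (n j)\<^sup>2" unfolding K_def by (simp add: power_mult_distrib)
      also have "\<dots> \<le> K * (\<Sum>i\<in>UNIV. (n i)\<^sup>2)" using K0
        by (intro mult_left_mono member_le_sum) auto
      finally show ?thesis .
    qed
    have step: "(infdist (T i x) Z)\<^sup>2 \<le> d\<^sup>2 - c i * (n i)\<^sup>2" for i
      unfolding d_def n_def
      by (rule infdist_step[OF _ Zne less_imp_le[OF c(1)] c(2)]) (auto simp: Z_def)
    have "(\<Sum>i\<in>UNIV. \<pi> i * (infdist (T i x) Z)\<^sup>2) \<le> (\<Sum>i\<in>UNIV. \<pi> i * (d\<^sup>2 - c i * (n i)\<^sup>2))"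
      using step pi_pos by (intro sum_mono mult_left_mono) (auto intro: less_imp_le)
    also have "\<dots> = d\<^sup>2 - (\<Sum>i\<in>UNIV. (\<pi> i * c i) * (n i)\<^sup>2)"
      by (simp add: right_diff_distrib sum_subtractf sum_distrib_right[symmetric] pi_sum mult.assoc)
    also have "\<dots> \<le> d\<^sup>2 - (\<Sum>i\<in>UNIV. m * (n i)\<^sup>2)"
      using mle by (intro diff_left_mono sum_mono mult_right_mono) auto
    also have "\<dots> = d\<^sup>2 - m * (\<Sum>i\<in>UNIV. (n i)\<^sup>2)" by (simp add: sum_distrib_left)
    also have "\<dots> \<le> (1 - m / (K + 1)) * d\<^sup>2"
    proof -
      have "d\<^sup>2 \<le> (K + 1) * (\<Sum>i\<in>UNIV. (n i)\<^sup>2)"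
      proof -
        have "0 \<le> (\<Sum>i\<in>UNIV. (n i)\<^sup>2)" by (intro sum_nonneg) auto
        then show ?thesis using dK by (simp add: algebra_simps)
      qed
      then have "d\<^sup>2 / (K + 1) \<le> (\<Sum>i\<in>UNIV. (n i)\<^sup>2)" using K0 by (simp add: field_simps)
      then have "m * (d\<^sup>2 / (K + 1)) \<le> m * (\<Sum>i\<in>UNIV. (n i)\<^sup>2)" using m0 by (intro mult_left_mono) auto
      then show ?thesis by (simp add: algebra_simps)
    qed
    finally show "(\<Sum>i\<in>UNIV. \<pi> i * (infdist (T i x) Z)\<^sup>2) \<le> (1 - m / (K + 1)) * (infdist x Z)\<^sup>2"
      unfolding d_def .
  qed
qed



lemma R_meas:
  fixes T :: "'i::finite \<Rightarrow> 'a::real_inner \<Rightarrow> 'a"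
  assumes avg: "\<And>i. averaged_nonexpansive (T i)" and "k \<le> n"
  shows "rand_iter T (\<lambda>k f. f k) x0 k \<in> borel_measurable (PiM {..<n} (\<lambda>_. count_space (UNIV::'i set)))"
  using assms(2)
proof (induction k)
  case 0 then show ?case by simp
next
  case (Suc k)
  have IH: "rand_iter T (\<lambda>k f. f k) x0 k \<in> borel_measurable (PiM {..<n} (\<lambda>_. count_space (UNIV::'i set)))"
    using Suc by simp
  have Tm: "T i \<in> borel_measurable borel" for i by (rule borel_measurable_continuous_onI[OF avg_cont[OF avg]])
  have "(\<lambda>f. T (f k) (rand_iter T (\<lambda>k f. f k) x0 k f)) \<in> borel_measurable (PiM {..<n} (\<lambda>_. count_space (UNIV::'i set)))"
    apply (rule measurable_compose_countable[where f="\<lambda>i f. T i (rand_iter T (\<lambda>k f. f k) x0 k f)"])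
     apply (rule measurable_compose[OF IH Tm])
    apply (rule measurable_component_singleton) using Suc by simp
  then show ?case by simp
qed

lemma R_eq:
  "k \<le> n \<Longrightarrow> rand_iter T idx x0 k \<omega> = rand_iter T (\<lambda>k f. f k) x0 k (restrict (\<lambda>i. idx i \<omega>) {..<n})"
  by (induction k) auto

lemma X_meas:
  fixes T :: "'i::finite \<Rightarrow> 'a::real_inner \<Rightarrow> 'a"
  assumes avg: "\<And>i. averaged_nonexpansive (T i)" and idx: "\<And>k. idx k \<in> measurable M (count_space UNIV)"
  shows "rand_iter T idx x0 k \<in> borel_measurable M"
proof (induction k)
  case 0 then show ?case by simp
next
  case (Suc k)
  have Tm: "T i \<in> borel_measurable borel" for i by (rule borel_measurable_continuous_onI[OF avg_cont[OF avg]])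
  have "(\<lambda>\<omega>. T (idx k \<omega>) (rand_iter T idx x0 k \<omega>)) \<in> borel_measurable M"
    by (rule measurable_compose_countable[where f="\<lambda>i \<omega>. T i (rand_iter T idx x0 k \<omega>)"])
      (rule measurable_compose[OF Suc Tm], rule idx)
  then show ?case by simp
qed



lemma cond_step:
  fixes T :: "'i::finite \<Rightarrow> 'a::real_inner \<Rightarrow> 'a" and \<pi> :: "'i \<Rightarrow> real"
    and M :: "'b measure" and idx :: "nat \<Rightarrow> 'b \<Rightarrow> 'i"
  assumes avg: "\<And>i. averaged_nonexpansive (T i)"
    and z: "z \<in> (\<Inter>i. Fix (T i))"
    and pi_pos: "\<And>i. \<pi> i > 0"
    and pi_sum: "(\<Sum>i\<in>UNIV. \<pi> i) = 1"
    and PM: "prob_space M"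
    and ind: "prob_space.indep_vars M (\<lambda>_. count_space UNIV) idx UNIV"
    and dist: "\<forall>n i. measure M {\<omega> \<in> space M. idx n \<omega> = i} = \<pi> i"
  shows "AE \<omega> in M.
           real_cond_exp M (vimage_algebra (space M) (rand_iter T idx x0 n) borel)
             (\<lambda>\<omega>. (infdist (rand_iter T idx x0 (Suc n) \<omega>) (\<Inter>i. Fix (T i)))\<^sup>2) \<omega>
           = (\<Sum>i\<in>UNIV. \<pi> i * (infdist (T i (rand_iter T idx x0 n \<omega>)) (\<Inter>i. Fix (T i)))\<^sup>2)"
proof -
  interpret P: prob_space M by (rule PM)
  define Z where "Z = (\<Inter>i. Fix (T i))"
  define X where "X = rand_iter T idx x0"
  define F where "F = vimage_algebra (space M) (X n) borel"
  define \<phi> where "\<phi> i y = (infdist (T i y) Z)\<^sup>2" for i y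
  define \<psi> where "\<psi> y = (\<Sum>i\<in>UNIV. \<pi> i * \<phi> i y)" for y
  define B0 where "B0 = (norm (x0 - z))\<^sup>2"
  have idx: "idx k \<in> measurable M (count_space UNIV)" for k
    using ind unfolding P.indep_vars_def by auto
  have Xm: "X k \<in> borel_measurable M" for k unfolding X_def by (rule X_meas[OF avg idx])
  have Tc: "continuous_on UNIV (T i)" for i by (rule avg_cont[OF avg])
  have \<phi>m: "\<phi> i \<in> borel_measurable borel" for i unfolding \<phi>_def
    by (intro borel_measurable_continuous_onI continuous_intros Tc)
  have \<psi>m: "\<psi> \<in> borel_measurable borel" unfolding \<psi>_def using \<phi>m by measurable
  have Xb: "norm (X k \<omega> - z) \<le> norm (x0 - z)" for k \<omega> unfolding X_def by (rule iter_bound[OF avg z])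
  have \<phi>b: "\<phi> i (X k \<omega>) \<le> B0" "0 \<le> \<phi> i (X k \<omega>)" for i k \<omega>
  proof -
    have "infdist (T i (X k \<omega>)) Z \<le> norm (T i (X k \<omega>) - z)" using infdist_le[of z Z] z by (simp add: Z_def dist_norm)
    also have "\<dots> \<le> norm (X k \<omega> - z)" using z by (intro avg_quasi[OF avg]) (auto simp: Fix_def)
    also have "\<dots> \<le> norm (x0 - z)" by (rule Xb)
    finally show "\<phi> i (X k \<omega>) \<le> B0" unfolding \<phi>_def B0_def by (rule power_mono[OF _ infdist_nonneg])
    show "0 \<le> \<phi> i (X k \<omega>)" unfolding \<phi>_def by simp
  qed
  have \<psi>b: "\<psi> (X k \<omega>) \<le> B0" "0 \<le> \<psi> (X k \<omega>)" for k \<omega>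
  proof -
    have "\<psi> (X k \<omega>) \<le> (\<Sum>i\<in>UNIV. \<pi> i * B0)" unfolding \<psi>_def
      using \<phi>b pi_pos by (intro sum_mono mult_left_mono) (auto intro: less_imp_le)
    then show "\<psi> (X k \<omega>) \<le> B0" by (simp add: sum_distrib_right[symmetric] pi_sum)
    show "0 \<le> \<psi> (X k \<omega>)" unfolding \<psi>_def
      using \<phi>b pi_pos by (intro sum_nonneg mult_nonneg_nonneg) (auto intro: less_imp_le)
  qed
  have g_eq: "(infdist (X (Suc n) \<omega>) Z)\<^sup>2 = \<phi> (idx n \<omega>) (X n \<omega>)" for \<omega>
    by (simp add: X_def \<phi>_def)
  have subalg: "subalgebra M F" unfolding subalgebra_def F_def
    using sets_image_in_sets[OF refl Xm[of n]] by simp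
  interpret S: sigma_finite_subalgebra M F
    by (rule finite_measure_subalgebra_is_sigma_finite) (unfold_locales, rule subalg)
  have gm: "(\<lambda>\<omega>. (infdist (X (Suc n) \<omega>) Z)\<^sup>2) \<in> borel_measurable M"
    by (rule measurable_compose[OF Xm]) (intro borel_measurable_continuous_onI continuous_intros)
  have gi: "integrable M (\<lambda>\<omega>. (infdist (X (Suc n) \<omega>) Z)\<^sup>2)"
    by (rule P.integrable_const_bound[where B=B0]) (use \<phi>b gm in \<open>auto simp: g_eq\<close>)
  have \<psi>Xm: "(\<lambda>\<omega>. \<psi> (X n \<omega>)) \<in> borel_measurable F"
    unfolding F_def by (rule measurable_compose[OF measurable_vimage_algebra1 \<psi>m]) simp
  have \<psi>Xi: "integrable M (\<lambda>\<omega>. \<psi> (X n \<omega>))"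
    by (rule P.integrable_const_bound[where B=B0]) (use \<psi>b Xm \<psi>m in \<open>auto\<close>)
  define Y where "Y \<omega> = restrict (\<lambda>k. idx k \<omega>) {..<n}" for \<omega>
  define Yn where "Yn \<omega> = restrict (\<lambda>k. idx k \<omega>) {n}" for \<omega>
  define R where "R = rand_iter T (\<lambda>k f. f k) x0 n"
  have XR: "X n \<omega> = R (Y \<omega>)" for \<omega> unfolding X_def R_def Y_def by (rule R_eq) simp
  have Rm: "R \<in> borel_measurable (PiM {..<n} (\<lambda>_. count_space UNIV))"
    unfolding R_def by (rule R_meas[OF avg]) simp
  have indepY: "P.indep_var (PiM {n} (\<lambda>_. count_space UNIV)) Yn (PiM {..<n} (\<lambda>_. count_space UNIV)) Y"
    unfolding Y_def Yn_def by (rule P.indep_var_restrict[OF ind]) auto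
  have Ym: "Y \<in> measurable M (PiM {..<n} (\<lambda>_. count_space UNIV))" by (rule P.indep_var_rv2[OF indepY])
  have key: "(\<integral>\<omega>\<in>A. (infdist (X (Suc n) \<omega>) Z)\<^sup>2 \<partial>M) = (\<integral>\<omega>\<in>A. \<psi> (X n \<omega>) \<partial>M)"
    if A: "A \<in> sets F" for A
  proof -
    obtain B where B: "B \<in> sets borel" "A = X n -` B \<inter> space M"
      using A unfolding F_def by (subst (asm) sets_vimage_algebra2) auto
    define v where "v i f = indicator B (R f) * \<phi> i (R f)" for i f
    define u where "u i f = (indicator {i} (f n) :: real)" for i :: 'i and f :: "nat \<Rightarrow> 'i"
    have vm: "v i \<in> borel_measurable (PiM {..<n} (\<lambda>_. count_space UNIV))" for i
      unfolding v_def using Rm \<phi>m B(1) by measurable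
    have um: "u i \<in> borel_measurable (PiM {n} (\<lambda>_. count_space UNIV))" for i
      unfolding u_def
      by (rule measurable_compose[OF measurable_component_singleton[of n "{n}"]]) auto
    have iv: "P.indep_var borel (\<lambda>\<omega>. u i (Yn \<omega>)) borel (\<lambda>\<omega>. v i (Y \<omega>))" for i
      by (rule P.indep_var_compose[unfolded comp_def, OF indepY um vm])
    have vYm: "(\<lambda>\<omega>. v i (Y \<omega>)) \<in> borel_measurable M" for i
      by (rule measurable_compose[OF Ym vm])
    have vb: "norm (v i (Y \<omega>)) \<le> B0" for i \<omega>
      using \<phi>b[of i n \<omega>] unfolding v_def XR[symmetric] by (auto simp: indicator_def)
    have vYi: "integrable M (\<lambda>\<omega>. v i (Y \<omega>))" for i
      by (rule P.integrable_const_bound[where B=B0]) (use vb vYm in auto)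
    have uYn: "u i (Yn \<omega>) = indicator {\<omega>. idx n \<omega> = i} \<omega>" for i \<omega>
      by (simp add: u_def Yn_def indicator_def)
    have uYi: "integrable M (\<lambda>\<omega>. u i (Yn \<omega>))" for i
      by (rule P.integrable_const_bound[where B=1]) (use P.indep_var_rv1[OF iv[of i]] in \<open>auto simp: uYn indicator_def\<close>)
    have uint: "(\<integral>\<omega>. u i (Yn \<omega>) \<partial>M) = \<pi> i" for i
    proof -
      have "{\<omega>. idx n \<omega> = i} \<inter> space M = {\<omega> \<in> space M. idx n \<omega> = i}" by auto
      then show ?thesis unfolding uYn using dist by simp
    qed
    have "(\<integral>\<omega>\<in>A. (infdist (X (Suc n) \<omega>) Z)\<^sup>2 \<partial>M) = (\<integral>\<omega>. (\<Sum>i\<in>UNIV. u i (Yn \<omega>) * v i (Y \<omega>)) \<partial>M)"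
      unfolding set_lebesgue_integral_def
    proof (rule Bochner_Integration.integral_cong[OF refl])
      fix \<omega> assume \<omega>: "\<omega> \<in> space M"
      have "(\<Sum>i\<in>UNIV. u i (Yn \<omega>) * v i (Y \<omega>)) = (\<Sum>i\<in>UNIV. if idx n \<omega> = i then v i (Y \<omega>) else 0)"
        by (intro sum.cong) (auto simp: uYn)
      also have "\<dots> = v (idx n \<omega>) (Y \<omega>)" by simp
      finally show "indicator A \<omega> *\<^sub>R (infdist (X (Suc n) \<omega>) Z)\<^sup>2 = (\<Sum>i\<in>UNIV. u i (Yn \<omega>) * v i (Y \<omega>))"
        using \<omega> B(2) by (simp add: g_eq v_def XR[symmetric] indicator_def)
    qed
    also have "\<dots> = (\<Sum>i\<in>UNIV. (\<integral>\<omega>. u i (Yn \<omega>) * v i (Y \<omega>) \<partial>M))"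
      by (rule Bochner_Integration.integral_sum) (rule P.indep_var_integrable[OF iv uYi vYi])
    also have "\<dots> = (\<Sum>i\<in>UNIV. \<pi> i * (\<integral>\<omega>. v i (Y \<omega>) \<partial>M))"
      by (intro sum.cong refl) (simp add: P.indep_var_lebesgue_integral[OF iv uYi vYi] uint)
    also have "\<dots> = (\<Sum>i\<in>UNIV. (\<integral>\<omega>. \<pi> i * v i (Y \<omega>) \<partial>M))"
      by simp
    also have "\<dots> = (\<integral>\<omega>. (\<Sum>i\<in>UNIV. \<pi> i * v i (Y \<omega>)) \<partial>M)"
      by (rule Bochner_Integration.integral_sum[symmetric]) (use vYi in auto)
    also have "\<dots> = (\<integral>\<omega>\<in>A. \<psi> (X n \<omega>) \<partial>M)"
      unfolding set_lebesgue_integral_def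
    proof (rule Bochner_Integration.integral_cong[OF refl])
      fix \<omega> assume \<omega>: "\<omega> \<in> space M"
      show "(\<Sum>i\<in>UNIV. \<pi> i * v i (Y \<omega>)) = indicator A \<omega> *\<^sub>R \<psi> (X n \<omega>)"
        using \<omega> B(2) by (simp add: v_def \<psi>_def XR[symmetric] indicator_def)
    qed
    finally show ?thesis .
  qed
  have "AE \<omega> in M. real_cond_exp M F (\<lambda>\<omega>. (infdist (X (Suc n) \<omega>) Z)\<^sup>2) \<omega> = \<psi> (X n \<omega>)"
    by (rule S.real_cond_exp_charact[OF key gi \<psi>Xi \<psi>Xm])
  then show ?thesis unfolding F_def X_def Z_def \<psi>_def \<phi>_def .
qed


theorem corollary6p4:
  fixes T :: "'i::finite \<Rightarrow> 'a::{real_inner, complete_space} \<Rightarrow> 'a"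
    and \<pi> :: "'i \<Rightarrow> real"
    and x0 :: 'a
  assumes avg: "\<And>i. averaged_nonexpansive (T i)"
    and reg: "\<And>i. bdd_lin_reg_op (T i)"
    and Z_ne: "(\<Inter>i. Fix (T i)) \<noteq> {}"
    and Z_reg: "bdd_lin_reg_sets (\<lambda>i. Fix (T i))"
    and pi_pos: "\<And>i. \<pi> i > 0"
    and pi_sum: "(\<Sum>i\<in>UNIV. \<pi> i) = 1"
  shows "\<exists>\<theta><1. \<forall>(M :: 'b measure) (idx :: nat \<Rightarrow> 'b \<Rightarrow> 'i).
           (prob_space M \<and>
            prob_space.indep_vars M (\<lambda>_. count_space UNIV) idx UNIV \<and>
            (\<forall>n i. measure M {\<omega> \<in> space M. idx n \<omega> = i} = \<pi> i))
           \<longrightarrow> (\<forall>n. AE \<omega> in M.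
                  real_cond_exp M (vimage_algebra (space M) (rand_iter T idx x0 n) borel)
                    (\<lambda>\<omega>. (infdist (rand_iter T idx x0 (Suc n) \<omega>) (\<Inter>i. Fix (T i)))\<^sup>2) \<omega>
                  \<le> \<theta> * (infdist (rand_iter T idx x0 n \<omega>) (\<Inter>i. Fix (T i)))\<^sup>2)"
proof -
  obtain z where z: "z \<in> (\<Inter>i. Fix (T i))" using Z_ne by blast
  define \<rho> where "\<rho> = norm z + norm (x0 - z) + 1"
  have \<rho>0: "\<rho> > 0" unfolding \<rho>_def by (smt (verit) norm_ge_zero)
  obtain \<theta> where \<theta>: "\<theta> < 1" and \<theta>b: "\<forall>x. norm x \<le> \<rho> \<longrightarrow>
     (\<Sum>i\<in>UNIV. \<pi> i * (infdist (T i x) (\<Inter>i. Fix (T i)))\<^sup>2) \<le> \<theta> * (infdist x (\<Inter>i. Fix (T i)))\<^sup>2"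
    using theta_exists[OF avg reg Z_reg pi_pos pi_sum \<rho>0] by blast
  show ?thesis
  proof (intro exI[of _ \<theta>] conjI allI impI)
    show "\<theta> < 1" by (rule \<theta>)
    fix M :: "'b measure" and idx :: "nat \<Rightarrow> 'b \<Rightarrow> 'i" and n
    assume H: "prob_space M \<and>
            prob_space.indep_vars M (\<lambda>_. count_space UNIV) idx UNIV \<and>
            (\<forall>n i. measure M {\<omega> \<in> space M. idx n \<omega> = i} = \<pi> i)"
    have AE1: "AE \<omega> in M.
           real_cond_exp M (vimage_algebra (space M) (rand_iter T idx x0 n) borel)
             (\<lambda>\<omega>. (infdist (rand_iter T idx x0 (Suc n) \<omega>) (\<Inter>i. Fix (T i)))\<^sup>2) \<omega>
           = (\<Sum>i\<in>UNIV. \<pi> i * (infdist (T i (rand_iter T idx x0 n \<omega>)) (\<Inter>i. Fix (T i)))\<^sup>2)"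
      using H by (intro cond_step[OF avg z pi_pos pi_sum]) auto
    have bnd: "(\<Sum>i\<in>UNIV. \<pi> i * (infdist (T i (rand_iter T idx x0 n \<omega>)) (\<Inter>i. Fix (T i)))\<^sup>2)
       \<le> \<theta> * (infdist (rand_iter T idx x0 n \<omega>) (\<Inter>i. Fix (T i)))\<^sup>2" for \<omega>
    proof -
      have "norm (rand_iter T idx x0 n \<omega> - z) \<le> norm (x0 - z)" by (rule iter_bound[OF avg z])
      moreover have "norm (rand_iter T idx x0 n \<omega>) \<le> norm z + norm (rand_iter T idx x0 n \<omega> - z)"
        by (metis add.commute diff_add_cancel norm_triangle_ineq)
      ultimately have "norm (rand_iter T idx x0 n \<omega>) \<le> \<rho>" unfolding \<rho>_def by linarith
      then show ?thesis using \<theta>b by blast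
    qed
    show "AE \<omega> in M.
                  real_cond_exp M (vimage_algebra (space M) (rand_iter T idx x0 n) borel)
                    (\<lambda>\<omega>. (infdist (rand_iter T idx x0 (Suc n) \<omega>) (\<Inter>i. Fix (T i)))\<^sup>2) \<omega>
                  \<le> \<theta> * (infdist (rand_iter T idx x0 n \<omega>) (\<Inter>i. Fix (T i)))\<^sup>2"
      using AE1 by (rule eventually_mono) (use bnd in simp)
  qed
qed

end
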